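(* Let $M,N\ge0$ be integers and let $\phi\in\mathcal{D}_N^M$. If $\{\phi(x-a):\ a\in I_p\}$ is an orthonormal system in $L^2(\mathbb{Q}_p)$, then $$\sum_{l=0}^{p^{M+N}-1}\Big|\widehat\phi\Big(\frac{l}{p^M}\Big)\Big|^2\chi_p\Big(\frac{lk}{p^{M+N}}\Big)=p^N\delta_{k0},\qquad k=0,1,\dots,p^N-1,$$ where $\delta_{k0}$ is the Kronecker delta.
   Context: $p$ is a prime, $\mathbb{Q}_p$ the field of $p$-adic numbers with norm $|\cdot|_p$. The fractional part of $x=p^{\gamma}\sum_{j\ge0}x_jp^j$ ($x_j\in\{0,\dots,p-1\}$, $x_0\ne0$) is $\{x\}_p=p^{\gamma}\sum_{j=0}^{-\gamma-1}x_jp^j$, $\{0\}_p=0$; $\chi_p(x)=e^{2\pi i\{x\}_p}$; $I_p=\{a\in\mathbb{Q}_p:\{a\}_p=a\}$; $B_\gamma(a)=\{x:|x-a|_p\le p^\gamma\}$. $dx$ is Haar measure with $B_0(0)$ of measure $1$; $\widehat f(\xi)=\int\chi_p(\xi x)f(x)\,dx$. A test function is a locally constant compactly supported complex function. $\mathcal{D}_N^M$ is the set of test functions $\phi$ that are $p^M$-periodic ($\phi(x+p^M)=\phi(x)$) and supported in $B_N(0)$; equivalently, locally constant $\phi$ with $\operatorname{supp}\phi\subset B_N(0)$, $\operatorname{supp}\widehat\phi\subset B_M(0)$. *)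

theory Defs
  imports "HOL-Analysis.Analysis"
begin

text \<open>An element x of Q_p is represented by the function n \<mapsto> (canonical
  representative of x modulo p^n Z_p), i.e. the unique rational of the form
  a / p^m with 0 \<le> x(n) < p^n and x - x(n) \<in> p^n Z_p.  In terms of the digit
  expansion x = sum_j x_j p^j one has x(n) = sum_(j<n) x_j p^j.\<close>

type_synonym padic = "int \<Rightarrow> rat"

definition rmod :: "rat \<Rightarrow> rat \<Rightarrow> rat" where
  "rmod r q = r - q * of_int \<lfloor>r / q\<rfloor>"

definition Qp :: "nat \<Rightarrow> padic set" where
  "Qp p = {x. (\<forall>n. \<exists>a::int. \<exists>m::nat. x n = of_int a / of_nat p ^ m)
             \<and> (\<forall>n. 0 \<le> x n \<and> x n < of_nat p powi n)
             \<and> (\<forall>n. \<exists>t::int. x (n + 1) - x n = of_nat p powi n * of_int t)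
             \<and> (\<exists>g. \<forall>n\<le>g. x n = 0)}"

text \<open>Embedding of Z[1/p] (rationals whose denominator is a power of p) into Q_p.\<close>
definition pemb :: "nat \<Rightarrow> rat \<Rightarrow> padic" where
  "pemb p r = (\<lambda>n. rmod r (of_nat p powi n))"

definition pzero :: padic where "pzero = (\<lambda>n. 0)"

definition padd :: "nat \<Rightarrow> padic \<Rightarrow> padic \<Rightarrow> padic" where
  "padd p x y = (\<lambda>n. rmod (x n + y n) (of_nat p powi n))"

definition pneg :: "nat \<Rightarrow> padic \<Rightarrow> padic" where
  "pneg p x = (\<lambda>n. rmod (- x n) (of_nat p powi n))"

definition psub :: "nat \<Rightarrow> padic \<Rightarrow> padic \<Rightarrow> padic" where
  "psub p x y = padd p x (pneg p y)"

definition pmult :: "nat \<Rightarrow> padic \<Rightarrow> padic \<Rightarrow> padic" where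
  "pmult p x y = (\<lambda>n. THE r. eventually (\<lambda>m. rmod (x m * y m) (of_nat p powi n) = r) at_top)"

text \<open>p-adic norm: |x|_p = p^(-v(x)), v(x) = largest n with x \<in> p^n Z_p.\<close>
definition pnorm :: "nat \<Rightarrow> padic \<Rightarrow> real" where
  "pnorm p x = (if (\<forall>n. x n = 0) then 0
                else real p powr (- real_of_int (GREATEST n. x n = 0)))"

definition pball :: "nat \<Rightarrow> int \<Rightarrow> padic \<Rightarrow> padic set" where
  "pball p g a = {x \<in> Qp p. pnorm p (psub p x a) \<le> real p powr real_of_int g}"

text \<open>Fractional part {x}_p = sum_(j<0) x_j p^j = x(0).\<close>
definition pfrac :: "padic \<Rightarrow> rat" where
  "pfrac x = x 0"

definition pchi :: "nat \<Rightarrow> padic \<Rightarrow> complex" where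
  "pchi p x = cis (2 * pi * of_rat (pfrac x))"

definition Ip :: "nat \<Rightarrow> padic set" where
  "Ip p = {a \<in> Qp p. pemb p (pfrac a) = a}"

definition is_test_fun :: "nat \<Rightarrow> (padic \<Rightarrow> complex) \<Rightarrow> bool" where
  "is_test_fun p f \<longleftrightarrow>
     (\<exists>n::int. \<forall>x\<in>Qp p. f x \<noteq> 0 \<longrightarrow> x \<in> pball p n pzero)
   \<and> (\<forall>x\<in>Qp p. \<exists>g::int. \<forall>y\<in>pball p g x. f y = f x)"

text \<open>Riemann sum of f over B_n(0) with mesh B_(-k)(0) (each coset has Haar measure p^-k);
  the cosets of p^k Z_p in p^(-n) Z_p are represented by j / p^n, j < p^(n+k).\<close>
definition riemann_sum :: "nat \<Rightarrow> (padic \<Rightarrow> complex) \<Rightarrow> nat \<Rightarrow> nat \<Rightarrow> complex" where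
  "riemann_sum p f n k =
     (1 / of_nat p ^ k) * (\<Sum>j<p ^ (n + k). f (pemb p (of_nat j / of_nat p ^ n)))"

text \<open>Haar integral (B_0(0) of measure 1) of a test function: the Riemann sums
  are eventually constant and equal to the integral.\<close>
definition haar_int :: "nat \<Rightarrow> (padic \<Rightarrow> complex) \<Rightarrow> complex" where
  "haar_int p f = (THE I. \<exists>K::nat. \<forall>n\<ge>K. \<forall>k\<ge>K. riemann_sum p f n k = I)"

definition pfourier :: "nat \<Rightarrow> (padic \<Rightarrow> complex) \<Rightarrow> padic \<Rightarrow> complex" where
  "pfourier p f xi = haar_int p (\<lambda>x. pchi p (pmult p xi x) * f x)"

definition DNM :: "nat \<Rightarrow> nat \<Rightarrow> nat \<Rightarrow> (padic \<Rightarrow> complex) set" where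
  "DNM p N M = {f. is_test_fun p f
      \<and> (\<forall>x\<in>Qp p. f (padd p x (pemb p (of_nat p ^ M))) = f x)
      \<and> (\<forall>x\<in>Qp p. f x \<noteq> 0 \<longrightarrow> x \<in> pball p (int N) pzero)}"

definition L2_inner :: "nat \<Rightarrow> (padic \<Rightarrow> complex) \<Rightarrow> (padic \<Rightarrow> complex) \<Rightarrow> complex" where
  "L2_inner p f g = haar_int p (\<lambda>x. f x * cnj (g x))"

definition orthonormal_translates :: "nat \<Rightarrow> (padic \<Rightarrow> complex) \<Rightarrow> bool" where
  "orthonormal_translates p f \<longleftrightarrow>
     (\<forall>a\<in>Ip p. \<forall>b\<in>Ip p.
        L2_inner p (\<lambda>x. f (psub p x a)) (\<lambda>x. f (psub p x b)) = (if a = b then 1 else 0))"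

end

theory Submission
  imports Defs
begin

lemma rmod_shift: "q \<noteq> 0 \<Longrightarrow> rmod (x + q * of_int t) q = rmod x q"
proof -
  assume q: "q \<noteq> 0"
  have "(x + q * of_int t) / q = x / q + of_int t" using q by (simp add: field_simps)
  then have "\<lfloor>(x + q * of_int t) / q\<rfloor> = \<lfloor>x/q\<rfloor> + t" by simp
  then show ?thesis unfolding rmod_def by (simp add: algebra_simps)
qed

lemma rmod_small: "0 \<le> r \<Longrightarrow> r < q \<Longrightarrow> rmod r q = r"
  unfolding rmod_def by (simp add: floor_eq_iff)

lemma rmod_zero_iff: "q \<noteq> 0 \<Longrightarrow> rmod r q = 0 \<longleftrightarrow> (\<exists>z::int. r = q * of_int z)"
proof
  assume q: "q \<noteq> 0" and "rmod r q = 0"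
  then show "\<exists>z::int. r = q * of_int z" unfolding rmod_def by auto
next
  assume q: "q \<noteq> 0" and "\<exists>z::int. r = q * of_int z"
  then obtain z where "r = q * of_int z" by auto
  then show "rmod r q = 0" unfolding rmod_def using q by simp
qed

lemma rmod_bounds: "(q::rat) > 0 \<Longrightarrow> 0 \<le> rmod r q \<and> rmod r q < q"
proof -
  assume q: "q > 0"
  have a: "of_int \<lfloor>r/q\<rfloor> \<le> r/q" "r/q < of_int \<lfloor>r/q\<rfloor> + 1" by linarith+
  have "q * of_int \<lfloor>r/q\<rfloor> \<le> r" using mult_left_mono[OF a(1), of q] q by (simp add: field_simps)
  moreover have "r < q * of_int \<lfloor>r/q\<rfloor> + q" using mult_strict_left_mono[OF a(2) q] q by (simp add: field_simps)
  ultimately show ?thesis unfolding rmod_def by simp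
qed

lemma padd_pemb: "p > 0 \<Longrightarrow> padd p (pemb p r) (pemb p s) = pemb p (r + s)"
proof (rule ext)
  fix n assume p: "p > 0"
  define Q where "Q = (of_nat p :: rat) powi n"
  have Q: "Q \<noteq> 0" using p unfolding Q_def by simp
  have "rmod r Q + rmod s Q = (r + s) + Q * of_int (- \<lfloor>r/Q\<rfloor> - \<lfloor>s/Q\<rfloor>)"
    unfolding rmod_def by (simp add: algebra_simps)
  then have "rmod (rmod r Q + rmod s Q) Q = rmod (r + s) Q"
    using rmod_shift[OF Q, of "r+s" "- \<lfloor>r/Q\<rfloor> - \<lfloor>s/Q\<rfloor>"] by simp
  then show "padd p (pemb p r) (pemb p s) n = pemb p (r + s) n"
    unfolding padd_def pemb_def Q_def[symmetric] .
qed

lemma pneg_pemb: "p > 0 \<Longrightarrow> pneg p (pemb p r) = pemb p (- r)"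
proof (rule ext)
  fix n assume p: "p > 0"
  define Q where "Q = (of_nat p :: rat) powi n"
  have Q: "Q \<noteq> 0" using p unfolding Q_def by simp
  have "- rmod r Q = (- r) + Q * of_int (\<lfloor>r/Q\<rfloor>)"
    unfolding rmod_def by (simp add: algebra_simps)
  then have "rmod (- rmod r Q) Q = rmod (- r) Q"
    using rmod_shift[OF Q, of "- r" "\<lfloor>r/Q\<rfloor>"] by simp
  then show "pneg p (pemb p r) n = pemb p (- r) n"
    unfolding pneg_def pemb_def Q_def[symmetric] .
qed

lemma psub_pemb: "p > 0 \<Longrightarrow> psub p (pemb p r) (pemb p s) = pemb p (r - s)"
  unfolding psub_def by (simp add: pneg_pemb padd_pemb)

lemma pzero_pemb: "pzero = pemb p 0"
  unfolding pzero_def pemb_def rmod_def by simp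

lemma pemb_eventually: 
  assumes p: "p \<ge> 2" and r: "0 \<le> r"
  shows "eventually (\<lambda>m. pemb p r m = r) at_top"
proof -
  have "\<forall>m\<ge>max 0 (\<lceil>r\<rceil> + 1). pemb p r m = r"
  proof (intro allI impI)
    fix m :: int assume m: "m \<ge> max 0 (\<lceil>r\<rceil> + 1)"
    have "r < of_int m" using m by linarith
    also have "\<dots> = of_nat (nat m)" using m by simp
    also have "\<dots> < of_nat (2 ^ nat m)" by (simp only: of_nat_less_iff less_exp)
    also have "\<dots> \<le> (of_nat p :: rat) ^ nat m"
      using p by (simp add: power_mono)
    also have "\<dots> = of_nat p powi m" using m by (simp add: power_int_def)
    finally show "pemb p r m = r" unfolding pemb_def using r by (simp add: rmod_small)
  qed
  then show ?thesis unfolding eventually_at_top_linorder by blast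
qed

lemma pmult_pemb:
  assumes p: "p \<ge> 2" and r: "0 \<le> r" and s: "0 \<le> s"
  shows "pmult p (pemb p r) (pemb p s) = pemb p (r * s)"
proof (rule ext)
  fix n
  have ev: "eventually (\<lambda>m. rmod (pemb p r m * pemb p s m) (of_nat p powi n) = pemb p (r * s) n) at_top"
    using eventually_conj[OF pemb_eventually[OF p r] pemb_eventually[OF p s]]
    by (rule eventually_mono) (simp add: pemb_def)
  show "pmult p (pemb p r) (pemb p s) n = pemb p (r * s) n"
    unfolding pmult_def
  proof (rule the_equality)
    fix y assume yev: "eventually (\<lambda>m. rmod (pemb p r m * pemb p s m) (of_nat p powi n) = y) at_top"
    obtain N0 where "\<forall>m\<ge>N0. rmod (pemb p r m * pemb p s m) (of_nat p powi n) = y \<and>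
      rmod (pemb p r m * pemb p s m) (of_nat p powi n) = pemb p (r * s) n"
      using eventually_conj[OF yev ev] unfolding eventually_at_top_linorder by blast
    then show "y = pemb p (r * s) n" by auto
  qed (rule ev)
qed

lemma pchi_pemb: "pchi p (pemb p r) = cis (2 * pi * of_rat r)"
proof -
  have "pfrac (pemb p r) = r - of_int \<lfloor>r\<rfloor>" unfolding pfrac_def pemb_def rmod_def by simp
  then have "of_rat (pfrac (pemb p r)) = of_rat r - (of_int \<lfloor>r\<rfloor> :: real)"
    by (simp add: of_rat_diff)
  then have "pchi p (pemb p r) = cis (2 * pi * of_rat r - 2 * pi * of_int \<lfloor>r\<rfloor>)"
    unfolding pchi_def by (simp only: right_diff_distrib)
  also have "\<dots> = cis (2 * pi * of_rat r) / cis (2 * pi * of_int \<lfloor>r\<rfloor>)" by (rule cis_divide[symmetric])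
  also have "\<dots> = cis (2 * pi * of_rat r)" by simp
  finally show ?thesis .
qed


definition dyad :: "nat \<Rightarrow> rat \<Rightarrow> bool" where
  "dyad p r \<longleftrightarrow> (\<exists>c::int. \<exists>u::nat. r = of_int c / of_nat p ^ u)"

lemma dyad_int: "dyad p (of_int c)"
  unfolding dyad_def by (rule exI[of _ c], rule exI[of _ 0]) simp

lemma dyad_nat_div: "dyad p (of_nat j / of_nat p ^ n)"
  unfolding dyad_def by (rule exI[of _ "int j"], rule exI[of _ n]) simp

lemma dyad_int_div: "dyad p (of_int j / of_nat p ^ n)"
  unfolding dyad_def by blast

lemma dyad_add: assumes "p > 0" "dyad p r" "dyad p s" shows "dyad p (r + s)"
proof -
  obtain c u d v where r: "r = of_int c / of_nat p ^ u" and s: "s = of_int d / of_nat p ^ v"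
    using assms unfolding dyad_def by blast
  have "r + s = of_int (c * p ^ v + d * p ^ u) / of_nat p ^ (u + v)"
    using assms(1) unfolding r s by (simp add: field_simps power_add)
  then show ?thesis unfolding dyad_def by blast
qed

lemma dyad_mult: assumes "p > 0" "dyad p r" "dyad p s" shows "dyad p (r * s)"
proof -
  obtain c u d v where r: "r = of_int c / of_nat p ^ u" and s: "s = of_int d / of_nat p ^ v"
    using assms unfolding dyad_def by blast
  have "r * s = of_int (c * d) / of_nat p ^ (u + v)"
    using assms(1) unfolding r s by (simp add: field_simps power_add)
  then show ?thesis unfolding dyad_def by blast
qed

lemma dyad_neg: assumes "dyad p r" shows "dyad p (- r)"
proof -
  obtain c u where r: "r = of_int c / of_nat p ^ u" using assms unfolding dyad_def by blast
  have "- r = of_int (- c) / of_nat p ^ u" unfolding r by simp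
  then show ?thesis unfolding dyad_def by blast
qed

lemma dyad_diff: "p > 0 \<Longrightarrow> dyad p r \<Longrightarrow> dyad p s \<Longrightarrow> dyad p (r - s)"
  using dyad_add[of p r "- s"] dyad_neg[of p s] by simp

lemma dyad_powi: "dyad p (of_nat p powi n)"
proof (cases "n \<ge> 0")
  case True
  then have "(of_nat p :: rat) powi n = of_int (int p ^ nat n) / of_nat p ^ 0"
    by (simp add: power_int_def)
  then show ?thesis unfolding dyad_def by blast
next
  case False
  then have "(of_nat p :: rat) powi n = of_int 1 / of_nat p ^ nat (- n)"
    by (simp add: power_int_def power_inverse divide_inverse)
  then show ?thesis unfolding dyad_def by blast
qed

lemma pemb_Qp:
  assumes p: "p \<ge> 2" and r: "dyad p r"
  shows "pemb p r \<in> Qp p"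
proof -
  have p0: "p > 0" using p by simp
  define q :: rat where "q = of_nat p"
  have q0: "q > 0" using p unfolding q_def by simp
  have Qpos: "q powi n > 0" for n using q0 by simp
  have i: "\<exists>a::int. \<exists>m::nat. pemb p r n = of_int a / of_nat p ^ m" for n
  proof -
    have "dyad p (r - q powi n * of_int \<lfloor>r / q powi n\<rfloor>)"
      unfolding q_def by (intro dyad_diff dyad_mult dyad_powi dyad_int p0 r)
    then show ?thesis unfolding pemb_def rmod_def q_def dyad_def .
  qed
  have ii: "0 \<le> pemb p r n \<and> pemb p r n < of_nat p powi n" for n
    unfolding pemb_def using rmod_bounds[OF Qpos[of n]] unfolding q_def .
  have iii: "\<exists>t::int. pemb p r (n + 1) - pemb p r n = of_nat p powi n * of_int t" for n
  proof -
    have e: "q powi (n + 1) = q powi n * q" using q0 by (simp add: power_int_add_1)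
    have "pemb p r (n + 1) - pemb p r n
        = q powi n * of_int (\<lfloor>r / q powi n\<rfloor> - int p * \<lfloor>r / q powi (n + 1)\<rfloor>)"
      unfolding pemb_def rmod_def q_def[symmetric] e by (simp add: algebra_simps q_def)
    then show ?thesis unfolding q_def by blast
  qed
  obtain c u where cu: "r = of_int c / of_nat p ^ u" using r unfolding dyad_def by blast
  have iv: "\<forall>n \<le> - int u. pemb p r n = 0"
  proof (intro allI impI)
    fix n :: int assume n: "n \<le> - int u"
    have qn: "q powi n = 1 / q ^ nat (- n)" using n
      by (cases "n \<ge> 0") (auto simp: power_int_def power_inverse divide_inverse)
    have nn: "nat (- n) = u + (nat (- n) - u)" using n by simp
    have "q powi n * of_int (c * int p ^ (nat (- n) - u))
        = of_int c * q ^ (nat (- n) - u) / (q ^ u * q ^ (nat (- n) - u))"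
      unfolding qn by (subst nn, subst power_add) (simp add: q_def)
    also have "\<dots> = r" unfolding cu q_def using q0 by (simp add: q_def)
    finally have "r = q powi n * of_int (c * int p ^ (nat (- n) - u))" by simp
    moreover have "q powi n \<noteq> 0" using Qpos[of n] by linarith
    ultimately show "pemb p r n = 0" unfolding pemb_def q_def[symmetric]
      using rmod_zero_iff[of "q powi n" r] by blast
  qed
  show ?thesis unfolding Qp_def using i ii iii iv by blast
qed

lemma pemb_Ip:
  assumes p: "p \<ge> 2" and r: "dyad p r" "0 \<le> r" "r < 1"
  shows "pemb p r \<in> Ip p"
proof -
  have "pfrac (pemb p r) = r" unfolding pfrac_def pemb_def using r by (simp add: rmod_small)
  then show ?thesis unfolding Ip_def using pemb_Qp[OF p r(1)] by simp
qed


lemma pemb_zero_iff: "p > 0 \<Longrightarrow> pemb p r n = 0 \<longleftrightarrow> (\<exists>z::int. r = of_nat p powi n * of_int z)"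
  unfolding pemb_def by (rule rmod_zero_iff) simp

lemma pemb_zero_down:
  assumes p: "p > 0" and z: "pemb p r n = 0" and mn: "m \<le> n"
  shows "pemb p r m = 0"
proof -
  obtain z where r: "r = of_nat p powi n * of_int z" using z pemb_zero_iff[OF p] by blast
  have "(of_nat p :: rat) powi n = of_nat p powi m * of_nat p powi (n - m)"
    using p by (simp flip: power_int_add)
  also have "(of_nat p :: rat) powi (n - m) = of_int (int p ^ nat (n - m))"
    using mn by (simp add: power_int_def)
  finally have "r = of_nat p powi m * of_int (int p ^ nat (n - m) * z)" unfolding r by simp
  then show ?thesis using pemb_zero_iff[OF p] by blast
qed

lemma pnorm_big:
  assumes p: "p \<ge> 2" and r: "dyad p r" and ni: "\<not> (\<exists>i::int. r = of_int i / of_nat p ^ N)"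
  shows "real p powr real N < pnorm p (pemb p r)"
proof -
  have p0: "p > 0" using p by simp
  define S where "S = {n. pemb p r n = 0}"
  have notN: "- int N \<notin> S"
  proof
    assume "- int N \<in> S"
    then obtain z where "r = of_nat p powi (- int N) * of_int z"
      unfolding S_def using pemb_zero_iff[OF p0] by blast
    then have "r = of_int z / of_nat p ^ N" by (simp add: power_int_minus divide_inverse)
    then show False using ni by blast
  qed
  have Sbound: "n \<in> S \<Longrightarrow> n < - int N" for n
    using pemb_zero_down[OF p0, of r n "- int N"] notN unfolding S_def by force
  obtain c u where cu: "r = of_int c / of_nat p ^ u" using r unfolding dyad_def by blast
  have uS: "- int u \<in> S"
  proof -
    have "r = of_nat p powi (- int u) * of_int c" unfolding cu
      by (simp add: power_int_minus divide_inverse)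
    then show ?thesis unfolding S_def using pemb_zero_iff[OF p0] by blast
  qed
  define T where "T = S \<inter> {- int u..}"
  have Tfin: "finite T" unfolding T_def
    by (rule finite_subset[of _ "{- int u..- int N}"]) (use Sbound in force)+
  have Tne: "T \<noteq> {}" unfolding T_def using uS by auto
  define m where "m = Max T"
  have mS: "m \<in> S" using Max_in[OF Tfin Tne] unfolding m_def T_def by auto
  have mge: "y \<in> S \<Longrightarrow> y \<le> m" for y
  proof (cases "y \<ge> - int u")
    case True
    assume "y \<in> S" then have "y \<in> T" using True unfolding T_def by auto
    then show ?thesis unfolding m_def using Tfin by simp
  next
    case False
    then have "y \<le> - int u" by simp
    also have "- int u \<le> m" unfolding m_def using Tfin uS T_def by (simp add: Max_ge)
    finally show ?thesis .
  qed
  have G: "(GREATEST n. pemb p r n = 0) = m"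
    by (rule Greatest_equality) (use mS mge S_def in auto)
  have nz: "\<not> (\<forall>n. pemb p r n = 0)" using notN unfolding S_def by auto
  have "pnorm p (pemb p r) = real p powr (- real_of_int m)"
    unfolding pnorm_def using nz G by auto
  moreover have "m < - int N" using Sbound mS by simp
  ultimately show ?thesis using p by simp
qed

lemma DNM_supp:
  assumes p: "p \<ge> 2" and phi: "phi \<in> DNM p N M" and r: "dyad p r" and nz: "phi (pemb p r) \<noteq> 0"
  shows "\<exists>i::int. r = of_int i / of_nat p ^ N"
proof (rule ccontr)
  assume ni: "\<not> ?thesis"
  have p0: "p > 0" using p by simp
  have "pemb p r \<in> pball p (int N) pzero" using phi pemb_Qp[OF p r] nz unfolding DNM_def by blast
  then have "pnorm p (pemb p r) \<le> real p powr real N"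
    unfolding pball_def pzero_pemb[of p] using psub_pemb[OF p0, of r 0] by simp
  then show False using pnorm_big[OF p r ni] by simp
qed

lemma DNM_per1:
  assumes p: "p \<ge> 2" and phi: "phi \<in> DNM p N M" and r: "dyad p r"
  shows "phi (pemb p (r + of_nat p ^ M)) = phi (pemb p r)"
proof -
  have p0: "p > 0" using p by simp
  have "phi (padd p (pemb p r) (pemb p (of_nat p ^ M))) = phi (pemb p r)"
    using phi pemb_Qp[OF p r] unfolding DNM_def by blast
  then show ?thesis unfolding padd_pemb[OF p0] .
qed

lemma DNM_per_nat:
  assumes p: "p \<ge> 2" and phi: "phi \<in> DNM p N M"
  shows "dyad p r \<Longrightarrow> phi (pemb p (r + of_nat t * of_nat p ^ M)) = phi (pemb p r)"
proof (induction t arbitrary: r)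
  case 0 then show ?case by simp
next
  case (Suc t)
  have p0: "p > 0" using p by simp
  have d: "dyad p (r + of_nat t * of_nat p ^ M)"
    by (intro dyad_add dyad_mult p0 Suc.prems) (metis dyad_int of_int_of_nat_eq, 
        metis dyad_int of_int_of_nat_eq of_nat_power)
  have e: "r + of_nat (Suc t) * of_nat p ^ M = (r + of_nat t * of_nat p ^ M) + of_nat p ^ M"
    by (simp add: algebra_simps)
  have "phi (pemb p (r + of_nat (Suc t) * of_nat p ^ M)) = phi (pemb p (r + of_nat t * of_nat p ^ M))"
    unfolding e by (rule DNM_per1[OF p phi d])
  also have "\<dots> = phi (pemb p r)" by (rule Suc.IH[OF Suc.prems])
  finally show ?case .
qed

lemma DNM_per:
  assumes p: "p \<ge> 2" and phi: "phi \<in> DNM p N M" and r: "dyad p r"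
  shows "phi (pemb p (r + of_int t * of_nat p ^ M)) = phi (pemb p r)"
proof (cases "t \<ge> 0")
  case True
  then show ?thesis using DNM_per_nat[OF p phi r, of "nat t"] by simp
next
  case False
  have p0: "p > 0" using p by simp
  define s where "s = r + of_int t * of_nat p ^ M"
  have d: "dyad p s" unfolding s_def
    by (intro dyad_add dyad_mult p0 r dyad_int) (metis dyad_int of_int_of_nat_eq of_nat_power)
  have e: "r = s + of_nat (nat (- t)) * of_nat p ^ M" unfolding s_def using False by simp
  have "phi (pemb p r) = phi (pemb p s)" by (subst e, rule DNM_per_nat[OF p phi d])
  then show ?thesis unfolding s_def by simp
qed


lemma sum_sparse:
  assumes d: "(d::nat) > 0"
  shows "(\<Sum>j<d*m. if d dvd j then H (j div d) else 0) = (\<Sum>i<m. H i)"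
proof -
  have "(\<Sum>j<d*m. if d dvd j then H (j div d) else 0) = (\<Sum>j\<in>{j\<in>{..<d*m}. d dvd j}. H (j div d))"
    by (simp only: sum.inter_filter[OF finite_lessThan])
  also have "{j\<in>{..<d*m}. d dvd j} = (\<lambda>i. d * i) ` {..<m}"
  proof (intro set_eqI iffI)
    fix j assume "j \<in> {j\<in>{..<d*m}. d dvd j}"
    then obtain i where "j = d * i" "d * i < d * m" by auto
    then show "j \<in> (\<lambda>i. d * i) ` {..<m}" using d by auto
  qed (use d in auto)
  also have "(\<Sum>j\<in>(\<lambda>i. d * i) ` {..<m}. H (j div d)) = (\<Sum>i<m. H i)"
    by (subst sum.reindex) (use d in \<open>auto simp: inj_on_def\<close>)
  finally show ?thesis .
qed

lemma periodic_mult: "(\<forall>i. G (i + P) = G i) \<Longrightarrow> G (P * m + i) = G (i::nat)"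
proof (induction m)
  case (Suc m)
  have "P * Suc m + i = (P * m + i) + P" by simp
  then show ?case using Suc by metis
qed simp

lemma sum_periodic:
  assumes G: "\<forall>i. G (i + P) = G i"
  shows "(\<Sum>i<P*m. G i) = of_nat m * (\<Sum>i<P. (G i :: complex))"
proof (induction m)
  case 0 then show ?case by simp
next
  case (Suc m)
  have "(\<Sum>i<P * Suc m. G i) = (\<Sum>i<P*m. G i) + (\<Sum>i\<in>{P*m..<P*m + P}. G i)"
    by (simp add: sum.atLeastLessThan_concat[symmetric] lessThan_atLeast0 algebra_simps)
  also have "(\<Sum>i\<in>{P*m..<P*m + P}. G i) = (\<Sum>i<P. G (P*m + i))"
    using sum.shift_bounds_nat_ivl[of G 0 "P*m" P] by (simp add: lessThan_atLeast0 add.commute)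
  also have "\<dots> = (\<Sum>i<P. G i)" using periodic_mult[OF G] by simp
  finally show ?case using Suc by (simp add: algebra_simps)
qed

lemma haar_eval:
  assumes p: "p > 0"
    and f: "\<forall>n\<ge>L. \<forall>j::nat. f (pemb p (of_nat j / of_nat p ^ n))
               = (if p^(n-L) dvd j then G (j div p^(n-L)) else 0)"
    and G: "\<forall>i. G (i + p^(L+K)) = G i"
  shows "haar_int p f = (1 / of_nat p ^ K) * (\<Sum>i<p^(L+K). G i)"
proof -
  define I where "I = (1 / of_nat p ^ K) * (\<Sum>i<p^(L+K). G i)"
  have rs: "riemann_sum p f n k = I" if n: "n \<ge> L" and k: "k \<ge> K" for n k
  proof -
    have e1: "p ^ (n + k) = p^(n-L) * p^(L+k)" using n by (simp flip: power_add)
    have e2: "p ^ (L + k) = p^(L+K) * p^(k-K)" using k by (simp flip: power_add)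
    have "(\<Sum>j<p^(n+k). f (pemb p (of_nat j / of_nat p ^ n)))
        = (\<Sum>j<p^(n-L) * p^(L+k). if p^(n-L) dvd j then G (j div p^(n-L)) else 0)"
      unfolding e1 using f n by simp
    also have "\<dots> = (\<Sum>i<p^(L+k). G i)" by (rule sum_sparse) (use p in simp)
    also have "\<dots> = of_nat (p^(k-K)) * (\<Sum>i<p^(L+K). G i)" unfolding e2 by (rule sum_periodic[OF G])
    finally have s: "(\<Sum>j<p^(n+k). f (pemb p (of_nat j / of_nat p ^ n)))
       = of_nat (p^(k-K)) * (\<Sum>i<p^(L+K). G i)" .
    have e3: "(of_nat p :: complex) ^ k = of_nat p ^ K * of_nat p ^ (k - K)" using k by (simp flip: power_add)
    show ?thesis unfolding riemann_sum_def s I_def e3 using p by (simp add: field_simps)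
  qed
  show ?thesis unfolding haar_int_def I_def[symmetric]
  proof (rule the_equality)
    show "\<exists>Ka. \<forall>n\<ge>Ka. \<forall>k\<ge>Ka. riemann_sum p f n k = I"
      by (rule exI[of _ "L + K"]) (auto intro: rs)
  next
    fix J assume "\<exists>Ka. \<forall>n\<ge>Ka. \<forall>k\<ge>Ka. riemann_sum p f n k = J"
    then obtain Ka where "\<forall>n\<ge>Ka. \<forall>k\<ge>Ka. riemann_sum p f n k = J" by blast
    then have "riemann_sum p f (Ka + L + K) (Ka + L + K) = J" by simp
    moreover have "riemann_sum p f (Ka + L + K) (Ka + L + K) = I" by (rule rs) simp_all
    ultimately show "J = I" by simp
  qed
qed


lemma roots_sum:
  assumes P: "P > 0"
  shows "(\<Sum>l<P. cis (2*pi*(real l * real_of_int m)/real P)) = (if int P dvd m then of_nat P else 0)"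
proof -
  define z where "z = cis (2*pi*real_of_int m/real P)"
  have t: "cis (2*pi*(real l * real_of_int m)/real P) = z ^ l" for l
  proof -
    have "z ^ l = cis (real l * (2*pi*real_of_int m/real P))" by (simp only: z_def Complex.DeMoivre)
    then show ?thesis by (simp add: algebra_simps)
  qed
  show ?thesis
  proof (cases "int P dvd m")
    case True
    then obtain t where m: "m = int P * t" by blast
    have "z = cis (2 * pi * real_of_int t)" unfolding z_def m using P by (simp add: field_simps)
    also have "\<dots> = 1" by simp
    finally show ?thesis unfolding t using True by simp
  next
    case False
    have z1: "z \<noteq> 1"
    proof
      assume "z = 1"
      then have "cos (2*pi*real_of_int m/real P) = 1" unfolding z_def
        by (metis cis.sel(1) one_complex.sel(1))
      then obtain n :: int where "2*pi*real_of_int m/real P = of_int n * 2 * pi" using cos_one_2pi_int by blast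
      then have "real_of_int m = real_of_int (int P * n)" using P by (simp add: field_simps)
      then have "m = int P * n" by linarith
      then show False using False by simp
    qed
    have "z ^ P = cis (real P * (2*pi*real_of_int m/real P))" by (simp only: z_def Complex.DeMoivre)
    also have "\<dots> = cis (2 * pi * real_of_int m)" using P by simp
    also have "\<dots> = 1" by simp
    finally have zP: "z ^ P = 1" .
    show ?thesis unfolding t geometric_sum[OF z1] zP using False by simp
  qed
qed

lemma cis_combine:
  "cis (2*pi*(real l * real i)/real P) * cnj (cis (2*pi*(real l * real j)/real P))
     * cis (2*pi*(real l * real k)/real P)
   = cis (2*pi*(real l * real_of_int (int i - int j + int k))/real P)"
  by (simp add: cis_cnj cis_mult algebra_simps add_divide_distrib diff_divide_distrib)

lemma dft:
  fixes C :: "int \<Rightarrow> complex"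
  assumes P: "P > 0" and per: "\<forall>i t. C (i + int P * t) = C i"
  shows "(\<Sum>l<P. ((\<Sum>i<P. cis(2*pi*(real l*real i)/real P) * C (int i))
            * cnj (\<Sum>i<P. cis(2*pi*(real l*real i)/real P) * C (int i)))
            * cis(2*pi*(real l*real k)/real P))
       = of_nat P * (\<Sum>j<P. C (int j - int k) * cnj (C (int j)))"
proof -
  define e where "e l x = cis (2*pi*(real l * real_of_int x)/real P)" for l :: nat and x :: int
  have step1: "((\<Sum>i<P. cis(2*pi*(real l*real i)/real P) * C (int i))
            * cnj (\<Sum>i<P. cis(2*pi*(real l*real i)/real P) * C (int i)))
            * cis(2*pi*(real l*real k)/real P)
       = (\<Sum>i<P. \<Sum>j<P. C (int i) * cnj (C (int j)) * e l (int i - int j + int k))" for l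
  proof -
    have "((\<Sum>i<P. cis(2*pi*(real l*real i)/real P) * C (int i))
            * cnj (\<Sum>j<P. cis(2*pi*(real l*real j)/real P) * C (int j)))
            * cis(2*pi*(real l*real k)/real P)
        = (\<Sum>i<P. \<Sum>j<P. (cis(2*pi*(real l*real i)/real P) * C (int i))
            * cnj (cis(2*pi*(real l*real j)/real P) * C (int j))
            * cis(2*pi*(real l*real k)/real P))"
      by (simp add: sum_distrib_left sum_distrib_right cnj_sum, rule sum.swap)
    also have "\<dots> = (\<Sum>i<P. \<Sum>j<P. C (int i) * cnj (C (int j)) * e l (int i - int j + int k))"
    proof (intro sum.cong refl)
      fix i j
      show "(cis(2*pi*(real l*real i)/real P) * C (int i))
            * cnj (cis(2*pi*(real l*real j)/real P) * C (int j))
            * cis(2*pi*(real l*real k)/real P) = C (int i) * cnj (C (int j)) * e l (int i - int j + int k)"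
        unfolding e_def cis_combine[symmetric] by (simp add: algebra_simps)
    qed
    finally show ?thesis .
  qed
  have "(\<Sum>l<P. ((\<Sum>i<P. cis(2*pi*(real l*real i)/real P) * C (int i))
            * cnj (\<Sum>i<P. cis(2*pi*(real l*real i)/real P) * C (int i)))
            * cis(2*pi*(real l*real k)/real P))
      = (\<Sum>l<P. \<Sum>i<P. \<Sum>j<P. C (int i) * cnj (C (int j)) * e l (int i - int j + int k))"
    using step1 by simp
  also have "\<dots> = (\<Sum>j<P. \<Sum>i<P. \<Sum>l<P. C (int i) * cnj (C (int j)) * e l (int i - int j + int k))"
    by (subst sum.swap, subst (2) sum.swap) (subst sum.swap, rule refl)
  also have "\<dots> = (\<Sum>j<P. \<Sum>i<P. (if int i = (int j - int k) mod int P then of_nat P * (C (int i) * cnj (C (int j))) else 0))"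
  proof (intro sum.cong refl)
    fix j i assume i: "i \<in> {..<P}"
    have r: "(\<Sum>l<P. e l (int i - int j + int k)) = (if int P dvd (int i - int j + int k) then of_nat P else 0)"
      unfolding e_def by (rule roots_sum[OF P])
    have "int P dvd (int i - int j + int k) \<longleftrightarrow> int i mod int P = (int j - int k) mod int P"
      by (simp add: mod_eq_dvd_iff algebra_simps)
    also have "int i mod int P = int i" using i by simp
    finally have d: "int P dvd (int i - int j + int k) \<longleftrightarrow> int i = (int j - int k) mod int P" .
    show "(\<Sum>l<P. C (int i) * cnj (C (int j)) * e l (int i - int j + int k))
        = (if int i = (int j - int k) mod int P then of_nat P * (C (int i) * cnj (C (int j))) else 0)"
      by (simp add: sum_distrib_left[symmetric] r d)
  qed
  also have "\<dots> = (\<Sum>j<P. of_nat P * (C (int j - int k) * cnj (C (int j))))"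
  proof (intro sum.cong refl)
    fix j
    define i0 where "i0 = nat ((int j - int k) mod int P)"
    have i0: "i0 < P" unfolding i0_def using P by (simp add: nat_less_iff)
    have i0e: "int i0 = (int j - int k) mod int P" unfolding i0_def using P by simp
    have "(\<Sum>i<P. (if int i = (int j - int k) mod int P then of_nat P * (C (int i) * cnj (C (int j))) else 0))
        = (\<Sum>i<P. (if i = i0 then of_nat P * (C (int i) * cnj (C (int j))) else 0))"
      by (intro sum.cong refl) (use i0e in auto)
    also have "\<dots> = of_nat P * (C (int i0) * cnj (C (int j)))" using i0 by simp
    also have "C (int i0) = C (int j - int k)"
    proof -
      have "int i0 = (int j - int k) + int P * (- ((int j - int k) div int P))"
        unfolding i0e by (simp add: algebra_simps minus_div_mult_eq_mod[symmetric])
      then show ?thesis using per by metis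
    qed
    finally show "(\<Sum>i<P. (if int i = (int j - int k) mod int P then of_nat P * (C (int i) * cnj (C (int j))) else 0))
        = of_nat P * (C (int j - int k) * cnj (C (int j)))" .
  qed
  also have "\<dots> = of_nat P * (\<Sum>j<P. C (int j - int k) * cnj (C (int j)))"
    by (simp add: sum_distrib_left)
  finally show ?thesis .
qed


definition Cint :: "nat \<Rightarrow> nat \<Rightarrow> (padic \<Rightarrow> complex) \<Rightarrow> int \<Rightarrow> complex" where
  "Cint p N phi i = phi (pemb p (of_int i / of_nat p ^ N))"

lemma Cint_per:
  assumes p: "p \<ge> 2" and phi: "phi \<in> DNM p N M"
  shows "Cint p N phi (i + int (p ^ (N + M)) * t) = Cint p N phi i"
proof -
  have p0: "(of_nat p :: rat) \<noteq> 0" using p by simp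
  have "(of_int (i + int (p ^ (N + M)) * t) :: rat) / of_nat p ^ N
      = of_int i / of_nat p ^ N + of_int t * of_nat p ^ M"
    using p0 by (simp add: field_simps power_add)
  then show ?thesis unfolding Cint_def using DNM_per[OF p phi dyad_int_div] by simp
qed

lemma phi_eval:
  assumes p: "p \<ge> 2" and phi: "phi \<in> DNM p N M" and n: "n \<ge> N"
  shows "phi (pemb p (of_int j / of_nat p ^ n))
       = (if int (p^(n-N)) dvd j then Cint p N phi (j div int (p^(n-N))) else 0)"
proof -
  define d where "d = p^(n-N)"
  have d0: "d > 0" unfolding d_def using p by simp
  have q0: "(of_nat p :: rat) \<noteq> 0" using p by simp
  have qn: "(of_nat p :: rat) ^ n = of_nat p ^ N * of_nat d"
    unfolding d_def using n by (simp flip: power_add)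
  show ?thesis
  proof (cases "int d dvd j")
    case True
    then obtain i where j: "j = int d * i" by blast
    have "(of_int j :: rat) / of_nat p ^ n = of_int i / of_nat p ^ N"
      unfolding j qn using d0 q0 by (simp add: field_simps)
    moreover have "j div int d = i" unfolding j using d0 by simp
    ultimately show ?thesis using True unfolding d_def Cint_def by simp
  next
    case False
    have "phi (pemb p (of_int j / of_nat p ^ n)) = 0"
    proof (rule ccontr)
      assume "phi (pemb p (of_int j / of_nat p ^ n)) \<noteq> 0"
      then obtain i where "(of_int j :: rat) / of_nat p ^ n = of_int i / of_nat p ^ N"
        using DNM_supp[OF p phi dyad_int_div] by blast
      then have "(of_int j :: rat) = of_int (i * int d)"
        unfolding qn using d0 q0 by (simp add: field_simps)
      then have "j = i * int d" by linarith
      then show False using False by simp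
    qed
    then show ?thesis using False unfolding d_def by simp
  qed
qed

lemma ortho:
  assumes p: "p \<ge> 2" and phi: "phi \<in> DNM p N M" and on: "orthonormal_translates p phi"
    and k: "k < p ^ N"
  shows "(1 / of_nat p ^ M) * (\<Sum>i<p^(N+M). Cint p N phi (int i - int k) * cnj (Cint p N phi (int i)))
       = (if k = 0 then 1 else 0)"
proof -
  have p0: "p > 0" using p by simp
  have q0: "(of_nat p :: rat) > 0" using p by simp
  define a where "a = pemb p (of_nat k / of_nat p ^ N)"
  define b where "b = pemb p 0"
  have aI: "a \<in> Ip p" unfolding a_def
  proof (rule pemb_Ip[OF p dyad_nat_div])
    show "0 \<le> (of_nat k :: rat) / of_nat p ^ N" by simp
    have "(of_nat k :: rat) < of_nat (p ^ N)" using k by (simp only: of_nat_less_iff)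
    then show "(of_nat k :: rat) / of_nat p ^ N < 1" using q0 by simp
  qed
  have bI: "b \<in> Ip p" unfolding b_def using pemb_Ip[OF p dyad_int[of p 0]] by simp
  have ab: "a = b \<longleftrightarrow> k = 0"
  proof
    assume "a = b"
    then have "a 0 = b 0" by simp
    moreover have "a 0 = of_nat k / of_nat p ^ N"
    proof -
      have "(of_nat k :: rat) < of_nat (p ^ N)" using k by (simp only: of_nat_less_iff)
      then have "(of_nat k :: rat) / of_nat p ^ N < 1" using q0 by simp
      then show ?thesis unfolding a_def pemb_def by (simp add: rmod_small)
    qed
    moreover have "b 0 = 0" unfolding b_def pemb_def rmod_def by simp
    ultimately show "k = 0" using q0 by simp
  qed (simp add: a_def b_def)
  define G where "G i = Cint p N phi (int i - int k) * cnj (Cint p N phi (int i))" for i :: nat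
  have ev: "\<forall>n\<ge>N. \<forall>j::nat. (\<lambda>x. phi (psub p x a) * cnj (phi (psub p x b))) (pemb p (of_nat j / of_nat p ^ n))
               = (if p^(n-N) dvd j then G (j div p^(n-N)) else 0)"
  proof (intro allI impI)
    fix n j :: nat assume n: "n \<ge> N"
    define d where "d = p^(n-N)"
    have d0: "d > 0" unfolding d_def using p by simp
    have qn: "(of_nat p :: rat) ^ n = of_nat p ^ N * of_nat d"
      unfolding d_def using n by (simp flip: power_add)
    have e1: "(of_nat j :: rat) / of_nat p ^ n - of_nat k / of_nat p ^ N
        = of_int (int j - int k * int d) / of_nat p ^ n"
      unfolding qn using d0 q0 by (simp add: field_simps)
    have e2: "(of_nat j :: rat) / of_nat p ^ n - 0 = of_int (int j) / of_nat p ^ n" by simp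
    have dv: "int d dvd (int j - int k * int d) \<longleftrightarrow> d dvd j"
      by (metis dvd_diff_commute dvd_triv_right int_dvd_int_iff dvd_add_left_iff diff_add_cancel
          dvd_diff)
    show "phi (psub p (pemb p (of_nat j / of_nat p ^ n)) a) * cnj (phi (psub p (pemb p (of_nat j / of_nat p ^ n)) b))
        = (if p^(n-N) dvd j then G (j div p^(n-N)) else 0)"
      unfolding a_def b_def psub_pemb[OF p0] e1 e2 phi_eval[OF p phi n] d_def[symmetric]
    proof (cases "d dvd j")
      case True
      have "(int j - int k * int d) div int d = int (j div d) - int k"
        using d0 True by (auto simp: div_mult_self1 zdiv_int elim!: dvdE)
      then show "(if int d dvd int j - int k * int d then Cint p N phi ((int j - int k * int d) div int d) else 0) *
          cnj (if int d dvd int j then Cint p N phi (int j div int d) else 0) =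
          (if d dvd j then G (j div d) else 0)"
        using True dv unfolding G_def by (simp add: zdiv_int)
    next
      case False
      then show "(if int d dvd int j - int k * int d then Cint p N phi ((int j - int k * int d) div int d) else 0) *
          cnj (if int d dvd int j then Cint p N phi (int j div int d) else 0) =
          (if d dvd j then G (j div d) else 0)" by simp
    qed
  qed
  have Gp: "\<forall>i. G (i + p^(N+M)) = G i"
  proof
    fix i
    have "int (i + p^(N+M)) - int k = (int i - int k) + int (p^(N+M)) * 1" by simp
    moreover have "int (i + p^(N+M)) = int i + int (p^(N+M)) * 1" by simp
    ultimately show "G (i + p^(N+M)) = G i" unfolding G_def
      by (metis Cint_per[OF p phi])
  qed
  have "L2_inner p (\<lambda>x. phi (psub p x a)) (\<lambda>x. phi (psub p x b)) = (if a = b then 1 else 0)"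
    using on aI bI unfolding orthonormal_translates_def by blast
  moreover have "L2_inner p (\<lambda>x. phi (psub p x a)) (\<lambda>x. phi (psub p x b))
       = (1 / of_nat p ^ M) * (\<Sum>i<p^(N+M). G i)"
    unfolding L2_inner_def by (rule haar_eval[OF p0 ev Gp])
  ultimately show ?thesis unfolding G_def ab by simp
qed


lemma fourier_eval:
  assumes p: "p \<ge> 2" and phi: "phi \<in> DNM p N M"
  shows "pfourier p phi (pemb p (of_nat l / of_nat p ^ M))
       = (1 / of_nat p ^ M) * (\<Sum>i<p^(N+M). cis (2*pi*(real l * real i)/real (p^(N+M))) * Cint p N phi (int i))"
proof -
  have p0: "p > 0" using p by simp
  have q0: "(of_nat p :: rat) > 0" using p by simp
  define G where "G i = cis (2*pi*(real l * real i)/real (p^(N+M))) * Cint p N phi (int i)" for i :: nat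
  have ev: "\<forall>n\<ge>N. \<forall>j::nat. (\<lambda>x. pchi p (pmult p (pemb p (of_nat l / of_nat p ^ M)) x) * phi x) (pemb p (of_nat j / of_nat p ^ n))
               = (if p^(n-N) dvd j then G (j div p^(n-N)) else 0)"
  proof (intro allI impI)
    fix n j :: nat assume n: "n \<ge> N"
    define d where "d = p^(n-N)"
    have d0: "d > 0" unfolding d_def using p by simp
    have qn: "(of_nat p :: rat) ^ n = of_nat p ^ N * of_nat d"
      unfolding d_def using n by (simp flip: power_add)
    have pm: "pmult p (pemb p (of_nat l / of_nat p ^ M)) (pemb p (of_nat j / of_nat p ^ n))
        = pemb p (of_nat l / of_nat p ^ M * (of_nat j / of_nat p ^ n))"
      by (rule pmult_pemb[OF p]) simp_all
    have ph: "phi (pemb p (of_nat j / of_nat p ^ n)) = (if d dvd j then Cint p N phi (int (j div d)) else 0)"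
      using phi_eval[OF p phi n, of "int j"] unfolding d_def[symmetric] by (simp add: zdiv_int)
    show "(\<lambda>x. pchi p (pmult p (pemb p (of_nat l / of_nat p ^ M)) x) * phi x) (pemb p (of_nat j / of_nat p ^ n))
        = (if p^(n-N) dvd j then G (j div p^(n-N)) else 0)"
    proof (cases "d dvd j")
      case True
      then obtain i where j: "j = d * i" by blast
      have "(of_nat l / of_nat p ^ M * (of_nat j / of_nat p ^ n) :: rat)
           = of_nat (l * i) / of_nat (p ^ (N + M))"
        unfolding j qn using d0 q0 by (simp add: field_simps power_add)
      then have "of_rat (of_nat l / of_nat p ^ M * (of_nat j / of_nat p ^ n) :: rat)
           = real (l * i) / real (p ^ (N + M))" by (simp add: of_rat_divide of_rat_mult of_rat_power)
      then have "pchi p (pemb p (of_nat l / of_nat p ^ M * (of_nat j / of_nat p ^ n)))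
          = cis (2*pi*(real l * real i)/real (p^(N+M)))"
        unfolding pchi_pemb by simp
      moreover have "j div d = i" unfolding j using d0 by simp
      ultimately show ?thesis using True pm ph unfolding G_def d_def[symmetric] by simp
    next
      case False
      then show ?thesis using ph unfolding d_def[symmetric] by simp
    qed
  qed
  have Gp: "\<forall>i. G (i + p^(N+M)) = G i"
  proof
    fix i
    have "cis (2*pi*(real l * real (i + p^(N+M)))/real (p^(N+M)))
       = cis (2*pi*(real l * real i)/real (p^(N+M))) * cis (2 * pi * real l)"
      unfolding cis_mult using p by (simp add: field_simps)
    also have "\<dots> = cis (2*pi*(real l * real i)/real (p^(N+M)))" by simp
    finally show "G (i + p^(N+M)) = G i" unfolding G_def
      using Cint_per[OF p phi, of "int i" 1] by simp
  qed
  show ?thesis unfolding pfourier_def G_def[symmetric] by (rule haar_eval[OF p0 ev Gp])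
qed

theorem theorem7:
  fixes p M N :: nat and phi :: "padic \<Rightarrow> complex"
  assumes "prime p"
    and "phi \<in> DNM p N M"
    and "orthonormal_translates p phi"
  shows "\<forall>k<p ^ N.
     (\<Sum>l<p ^ (M + N).
        complex_of_real ((cmod (pfourier p phi (pemb p (of_nat l / of_nat p ^ M))))\<^sup>2)
        * pchi p (pemb p (of_nat (l * k) / of_nat p ^ (M + N))))
     = (if k = 0 then of_nat p ^ N else 0)"
proof (intro allI impI)
  fix k assume k: "k < p ^ N"
  have p: "p \<ge> 2" using assms(1) by (simp add: prime_ge_2_nat)
  have phi: "phi \<in> DNM p N M" by fact
  define P where "P = p ^ (N + M)"
  have P0: "P > 0" unfolding P_def using p by simp
  have PMN: "p ^ (M + N) = P" unfolding P_def by (simp add: add.commute)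
  define C where "C = Cint p N phi"
  define A where "A l = (\<Sum>i<P. cis(2*pi*(real l*real i)/real P) * C (int i))" for l
  have per: "\<forall>i t. C (i + int P * t) = C i" unfolding C_def P_def using Cint_per[OF p phi] by blast
  have trm: "complex_of_real ((cmod (pfourier p phi (pemb p (of_nat l / of_nat p ^ M))))\<^sup>2)
        * pchi p (pemb p (of_nat (l * k) / of_nat p ^ (M + N)))
      = (1 / of_nat p ^ M)^2 * ((A l * cnj (A l)) * cis(2*pi*(real l*real k)/real P))" for l
  proof -
    have f: "pfourier p phi (pemb p (of_nat l / of_nat p ^ M)) = (1 / of_nat p ^ M) * A l"
      unfolding fourier_eval[OF p phi] A_def C_def P_def ..
    have c: "pchi p (pemb p (of_nat (l * k) / of_nat p ^ (M + N))) = cis(2*pi*(real l*real k)/real P)"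
    proof -
      have "(of_rat (of_nat (l * k) / of_nat p ^ (M + N) :: rat) :: real) = real (l * k) / real P"
        unfolding PMN[symmetric] by (simp add: of_rat_divide of_rat_mult of_rat_power)
      then show ?thesis unfolding pchi_pemb by simp
    qed
    show ?thesis unfolding complex_norm_square f c by (simp add: power2_eq_square)
  qed
  have "(\<Sum>l<p ^ (M + N).
        complex_of_real ((cmod (pfourier p phi (pemb p (of_nat l / of_nat p ^ M))))\<^sup>2)
        * pchi p (pemb p (of_nat (l * k) / of_nat p ^ (M + N))))
      = (1 / of_nat p ^ M)^2 * (\<Sum>l<P. (A l * cnj (A l)) * cis(2*pi*(real l*real k)/real P))"
    unfolding trm PMN by (simp add: sum_distrib_left)
  also have "(\<Sum>l<P. (A l * cnj (A l)) * cis(2*pi*(real l*real k)/real P))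
      = of_nat P * (\<Sum>j<P. C (int j - int k) * cnj (C (int j)))"
    unfolding A_def by (rule dft[OF P0 per])
  also have "(\<Sum>j<P. C (int j - int k) * cnj (C (int j))) = of_nat p ^ M * (if k = 0 then 1 else 0)"
  proof -
    have "(1 / of_nat p ^ M) * (\<Sum>j<P. C (int j - int k) * cnj (C (int j))) = (if k = 0 then 1 else 0)"
      unfolding C_def P_def by (rule ortho[OF p phi assms(3) k])
    then show ?thesis using p by (simp add: field_simps)
  qed
  finally show "(\<Sum>l<p ^ (M + N).
        complex_of_real ((cmod (pfourier p phi (pemb p (of_nat l / of_nat p ^ M))))\<^sup>2)
        * pchi p (pemb p (of_nat (l * k) / of_nat p ^ (M + N))))
     = (if k = 0 then of_nat p ^ N else 0)"
    using p unfolding P_def by (simp add: power_add field_simps power2_eq_square)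
qed

end
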